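(* Under the standing assumptions in the context, the set of points $\epsilon\in\operatorname{int}(\mathcal{E})$ at which the primal optimal set mapping $\mathcal{P}^*$ or the dual optimal set mapping $\mathcal{D}^*$ fails to be Painlevé–Kuratowski continuous relative to $\operatorname{int}(\mathcal{E})$ has empty interior.
   Context: Let $\mathbb{S}^n$ denote the space of real symmetric $n\times n$ matrices with inner product $\langle C,X\rangle=\operatorname{trace}(CX)$; $X\succeq 0$ means positive semidefinite, $X\succ0$ positive definite. Fix $C,\bar C,A^1,\dots,A^m\in\mathbb{S}^n$, $b\in\mathbb{R}^m$. For $\epsilon\in\mathbb{R}$: $(P_\epsilon)$: $\inf\{\langle C+\epsilon\bar C,X\rangle:\langle A^i,X\rangle=b_i\ (i=1,\dots,m),\ X\succeq0\}$; $(D_\epsilon)$: $\sup\{b^Ty:\sum_i y_iA^i+S=C+\epsilon\bar C,\ S\succeq0\}$. Let $v(\epsilon)$ be the optimal value of $(P_\epsilon)$ and $\mathcal{E}=\{\epsilon:v(\epsilon)>-\infty\}$. Standing assumptions: $A^1,\dots,A^m$ are linearly independent, and there exist $X\succ0$ feasible for $(P_0)$ and $(y,S)$ with $S\succ0$ feasible for $(D_0)$. The optimal set mappings are $\mathcal{P}^*(\epsilon)$ = set of optimal solutions $X$ of $(P_\epsilon)$ and $\mathcal{D}^*(\epsilon)$ = set of optimal solutions $(y,S)$ of $(D_\epsilon)$. Painlevé–Kuratowski notions: for sets $\mathcal{C}_k$, $\limsup_k\mathcal{C}_k=\{\nu:\liminf_k\operatorname{dist}(\nu,\mathcal{C}_k)=0\}$,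 $\liminf_k\mathcal{C}_k=\{\nu:\limsup_k\operatorname{dist}(\nu,\mathcal{C}_k)=0\}$; a set-valued map $\Phi$ is outer semicontinuous at $\bar\xi$ relative to $\mathcal{X}$ if $\limsup_k\Phi(\xi_k)\subseteq\Phi(\bar\xi)$ for every sequence $\mathcal{X}\ni\xi_k\to\bar\xi$, inner semicontinuous if $\liminf_k\Phi(\xi_k)\supseteq\Phi(\bar\xi)$ for every such sequence, and continuous if both. *)

theory Defs
  imports "HOL-Analysis.Analysis"
begin

definition symmetric_mat :: "real^'n^'n \<Rightarrow> bool" where
  "symmetric_mat X \<longleftrightarrow> transpose X = X"

definition psd :: "real^'n^'n \<Rightarrow> bool" where
  "psd X \<longleftrightarrow> symmetric_mat X \<and> (\<forall>x. 0 \<le> x \<bullet> (X *v x))"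

definition pd :: "real^'n^'n \<Rightarrow> bool" where
  "pd X \<longleftrightarrow> symmetric_mat X \<and> (\<forall>x. x \<noteq> 0 \<longrightarrow> 0 < x \<bullet> (X *v x))"

definition mat_inner :: "real^'n^'n \<Rightarrow> real^'n^'n \<Rightarrow> real" where
  "mat_inner C X = trace (C ** X)"

definition primal_feasible :: "('m::finite \<Rightarrow> real^'n^'n) \<Rightarrow> real^'m \<Rightarrow> (real^'n^'n) set" where
  "primal_feasible A b = {X. (\<forall>i. mat_inner (A i) X = b $ i) \<and> psd X}"

text \<open>Optimal value v(eps) of (P_eps), in the extended reals (+infinity if infeasible).\<close>
definition primal_value ::
  "real^'n^'n \<Rightarrow> real^'n^'n \<Rightarrow> ('m::finite \<Rightarrow> real^'n^'n) \<Rightarrow> real^'m \<Rightarrow> real \<Rightarrow> ereal" where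
  "primal_value C Cb A b eps =
     (INF X\<in>primal_feasible A b. ereal (mat_inner (C + eps *\<^sub>R Cb) X))"

definition finite_value_set ::
  "real^'n^'n \<Rightarrow> real^'n^'n \<Rightarrow> ('m::finite \<Rightarrow> real^'n^'n) \<Rightarrow> real^'m \<Rightarrow> real set" where
  "finite_value_set C Cb A b = {eps. primal_value C Cb A b eps > -\<infinity>}"

definition primal_opt ::
  "real^'n^'n \<Rightarrow> real^'n^'n \<Rightarrow> ('m::finite \<Rightarrow> real^'n^'n) \<Rightarrow> real^'m \<Rightarrow> real \<Rightarrow> (real^'n^'n) set" where
  "primal_opt C Cb A b eps =
     {X \<in> primal_feasible A b. \<forall>X'\<in>primal_feasible A b.
        mat_inner (C + eps *\<^sub>R Cb) X \<le> mat_inner (C + eps *\<^sub>R Cb) X'}"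

definition dual_feasible ::
  "real^'n^'n \<Rightarrow> real^'n^'n \<Rightarrow> ('m::finite \<Rightarrow> real^'n^'n) \<Rightarrow> real \<Rightarrow> ((real^'m) \<times> (real^'n^'n)) set" where
  "dual_feasible C Cb A eps =
     {(y, S). (\<Sum>i\<in>UNIV. y $ i *\<^sub>R A i) + S = C + eps *\<^sub>R Cb \<and> psd S}"

definition dual_opt ::
  "real^'n^'n \<Rightarrow> real^'n^'n \<Rightarrow> ('m::finite \<Rightarrow> real^'n^'n) \<Rightarrow> real^'m \<Rightarrow> real \<Rightarrow> ((real^'m) \<times> (real^'n^'n)) set" where
  "dual_opt C Cb A b eps =
     {(y, S) \<in> dual_feasible C Cb A eps. \<forall>(y', S')\<in>dual_feasible C Cb A eps. b \<bullet> y' \<le> b \<bullet> y}"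

text \<open>Painleve--Kuratowski limits, with dist(x, empty) = +infinity.\<close>
definition set_dist_e :: "'a::metric_space \<Rightarrow> 'a set \<Rightarrow> ereal" where
  "set_dist_e x S = (INF s\<in>S. ereal (dist x s))"

definition PK_limsup :: "(nat \<Rightarrow> 'a::metric_space set) \<Rightarrow> 'a set" where
  "PK_limsup Cs = {x. liminf (\<lambda>k. set_dist_e x (Cs k)) = 0}"

definition PK_liminf :: "(nat \<Rightarrow> 'a::metric_space set) \<Rightarrow> 'a set" where
  "PK_liminf Cs = {x. limsup (\<lambda>k. set_dist_e x (Cs k)) = 0}"

definition outer_semicont_rel :: "('b::metric_space \<Rightarrow> 'a::metric_space set) \<Rightarrow> 'b set \<Rightarrow> 'b \<Rightarrow> bool" where
  "outer_semicont_rel Phi XX xi \<longleftrightarrow>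
     (\<forall>xs. (\<forall>k. xs k \<in> XX) \<and> xs \<longlonglongrightarrow> xi \<longrightarrow> PK_limsup (\<lambda>k. Phi (xs k)) \<subseteq> Phi xi)"

definition inner_semicont_rel :: "('b::metric_space \<Rightarrow> 'a::metric_space set) \<Rightarrow> 'b set \<Rightarrow> 'b \<Rightarrow> bool" where
  "inner_semicont_rel Phi XX xi \<longleftrightarrow>
     (\<forall>xs. (\<forall>k. xs k \<in> XX) \<and> xs \<longlonglongrightarrow> xi \<longrightarrow> Phi xi \<subseteq> PK_liminf (\<lambda>k. Phi (xs k)))"

definition PK_cont_rel :: "('b::metric_space \<Rightarrow> 'a::metric_space set) \<Rightarrow> 'b set \<Rightarrow> 'b \<Rightarrow> bool" where
  "PK_cont_rel Phi XX xi \<longleftrightarrow> outer_semicont_rel Phi XX xi \<and> inner_semicont_rel Phi XX xi"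

end

theory Submission
  imports Defs
begin


lemma interior_frontier_closed:
  assumes "closed S" shows "interior (frontier S) = {}"
proof -
  have "interior (frontier S) \<subseteq> interior S"
    using assms by (intro interior_mono) (simp add: frontier_subset_closed)
  moreover have "interior (frontier S) \<subseteq> frontier S" by (rule interior_subset)
  ultimately show ?thesis unfolding frontier_def by auto
qed

lemma osc_closed_graph:
  fixes F :: "real \<Rightarrow> 'a::euclidean_space set"
  assumes G: "closed {(s,z). z \<in> F s}"
  shows "outer_semicont_rel F XX t"
  unfolding outer_semicont_rel_def
proof (intro allI impI subsetI)
  fix xs x assume xs: "(\<forall>k. xs k \<in> XX) \<and> xs \<longlonglongrightarrow> t" and x: "x \<in> PK_limsup (\<lambda>k. F (xs k))"
  show "x \<in> F t"
  proof (rule ccontr)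
    assume nx: "x \<notin> F t"
    have "open (- {(s,z). z \<in> F s})" using G by auto
    moreover have "(t,x) \<in> - {(s,z). z \<in> F s}" using nx by auto
    ultimately obtain e where e: "e > 0" and eb: "\<And>p. dist p (t,x) < e \<Longrightarrow> p \<notin> {(s,z). z \<in> F s}"
      unfolding open_dist by blast
    have ev: "eventually (\<lambda>k. dist (xs k) t < e/2) sequentially"
      using xs e tendstoD[of xs t sequentially "e/2"] by auto
    have "eventually (\<lambda>k. ereal (e/2) \<le> set_dist_e x (F (xs k))) sequentially"
    proof (rule eventually_mono[OF ev])
      fix k assume k: "dist (xs k) t < e/2"
      show "ereal (e/2) \<le> set_dist_e x (F (xs k))"
        unfolding set_dist_e_def
      proof (rule INF_greatest)
        fix z assume z: "z \<in> F (xs k)"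
        show "ereal (e/2) \<le> ereal (dist x z)"
        proof (rule ccontr)
          assume "\<not> ereal (e/2) \<le> ereal (dist x z)"
          hence dz: "dist x z < e/2" by simp
          have "dist (xs k, z) (t, x) \<le> dist (xs k) t + dist z x"
            using sqrt_sum_squares_le_sum_abs[of "dist (xs k) t" "dist z x"] by (simp add: dist_Pair_Pair)
          also have "\<dots> < e" using k dz by (simp add: dist_commute)
          finally show False using eb z by auto
        qed
      qed
    qed
    hence "ereal (e/2) \<le> liminf (\<lambda>k. set_dist_e x (F (xs k)))" by (rule Liminf_bounded)
    moreover have "liminf (\<lambda>k. set_dist_e x (F (xs k))) = 0" using x unfolding PK_limsup_def by auto
    ultimately show False using e by (simp add: zero_ereal_def)
  qed
qed



lemma closed_hit_compact:
  fixes F :: "real \<Rightarrow> 'a::euclidean_space set"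
  assumes G: "closed {(s,z). z \<in> F s}" and K: "compact K"
  shows "closed {s. F s \<inter> K \<noteq> {}}"
proof (unfold closed_sequential_limits, intro allI impI, elim conjE)
  fix ss s assume ss: "\<forall>n. ss n \<in> {s. F s \<inter> K \<noteq> {}}" and lim: "ss \<longlonglongrightarrow> s"
  have "\<forall>n. \<exists>w. w \<in> F (ss n) \<inter> K" using ss by blast
  then obtain z where z: "\<And>n. z n \<in> F (ss n) \<inter> K" by metis
  have zK: "\<forall>n. z n \<in> K" using z by blast
  obtain l r where l: "l \<in> K" and r: "strict_mono r" and zl: "(z \<circ> r) \<longlonglongrightarrow> l"
    by (rule seq_compactE[OF compact_imp_seq_compact[OF K] zK])
  have "(\<lambda>n. (ss (r n), z (r n))) \<longlonglongrightarrow> (s, l)"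
    using zl LIMSEQ_subseq_LIMSEQ[OF lim r] by (intro tendsto_Pair) (auto simp: o_def)
  moreover have "\<forall>n. (ss (r n), z (r n)) \<in> {(s,z). z \<in> F s}" using z by auto
  ultimately have "(s,l) \<in> {(s,z). z \<in> F s}"
    using G[unfolded closed_sequential_limits, rule_format, of "\<lambda>n. (ss (r n), z (r n))" "(s,l)"]
    by blast
  thus "s \<in> {s. F s \<inter> K \<noteq> {}}" using l by auto
qed

lemma isc_closed_graph:
  fixes F :: "real \<Rightarrow> 'a::euclidean_space set"
  assumes G: "closed {(s,z). z \<in> F s}"
  shows "\<exists>\<D>. countable \<D> \<and> (\<forall>D\<in>\<D>. closed D \<and> interior D = {})
     \<and> {t. \<not> inner_semicont_rel F XX t} \<subseteq> \<Union>\<D>"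
proof -
  obtain \<B> :: "'a set set" where B: "countable \<B>" "\<And>C. C \<in> \<B> \<Longrightarrow> open C"
       "\<And>S. open S \<Longrightarrow> \<exists>U. U \<subseteq> \<B> \<and> S = \<Union>U"
    by (metis univ_second_countable)
  define \<D> where "\<D> = (\<lambda>U. frontier (closure {s. F s \<inter> closure U \<noteq> {}})) ` \<B>"
  have "countable \<D>" using B(1) unfolding \<D>_def by simp
  moreover have "\<forall>D\<in>\<D>. closed D \<and> interior D = {}"
    unfolding \<D>_def by (auto intro!: interior_frontier_closed)
  moreover have "{t. \<not> inner_semicont_rel F XX t} \<subseteq> \<Union>\<D>"
  proof
    fix t assume "t \<in> {t. \<not> inner_semicont_rel F XX t}"
    then obtain xs x where xs: "xs \<longlonglongrightarrow> t" and x: "x \<in> F t"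
      and nl: "limsup (\<lambda>k. set_dist_e x (F (xs k))) \<noteq> 0"
      unfolding inner_semicont_rel_def PK_liminf_def by auto
    define f where "f = (\<lambda>k. set_dist_e x (F (xs k)))"
    have f0: "\<And>k. 0 \<le> f k" unfolding f_def set_dist_e_def
      by (auto intro!: INF_greatest simp: zero_ereal_def)
    have "0 \<le> limsup f" using f0 by (intro le_Limsup) auto
    hence "\<not> limsup f \<le> 0" using nl unfolding f_def by auto
    hence "\<not> (\<forall>y>0. eventually (\<lambda>k. y > f k) sequentially)"
      using Limsup_le_iff[where C=0 and F=sequentially and X=f] by simp
    then obtain y where y: "y > 0" "\<not> eventually (\<lambda>k. y > f k) sequentially"
      by blast
    obtain e where e: "e > 0" "ereal e \<le> y"
    proof (cases y)
      case (real r)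
      with y(1) have "r > 0" by simp
      thus ?thesis using that[of r] real by simp
    next
      case PInf thus ?thesis using that[of 1] by simp
    next
      case MInf thus ?thesis using y(1) by simp
    qed
    have freq: "frequently (\<lambda>k. ereal e \<le> f k) sequentially"
    proof -
      have "frequently (\<lambda>k. \<not> y > f k) sequentially" using y(2) by (simp add: not_eventually)
      thus ?thesis by (rule frequently_elim1) (meson e(2) not_less order_trans)
    qed
    obtain U where U: "U \<in> \<B>" "x \<in> U" "U \<subseteq> ball x (e/2)"
    proof -
      obtain \<U> where U: "\<U> \<subseteq> \<B>" "ball x (e/2) = \<Union>\<U>" using B(3)[of "ball x (e/2)"] by auto
      have "x \<in> ball x (e/2)" using e(1) by simp
      then obtain V where "V \<in> \<U>" "x \<in> V" using U(2) by auto
      thus ?thesis using that[of V] U by auto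
    qed
    have cU: "closure U \<subseteq> cball x (e/2)"
      using U(3) closure_mono closure_ball_lemma
      by (metis closed_cball ball_subset_cball closure_minimal subset_trans)
    have Kc: "compact (closure U)"
      using cU by (meson bounded_cball bounded_subset closed_closure compact_eq_bounded_closed)
    define A where "A = {s. F s \<inter> closure U \<noteq> {}}"
    have Acl: "closed A" unfolding A_def by (rule closed_hit_compact[OF G Kc])
    have tA: "t \<in> A" unfolding A_def using x U(2) closure_subset by auto
    have "t \<notin> interior A"
    proof
      assume "t \<in> interior A"
      hence "eventually (\<lambda>k. xs k \<in> interior A) sequentially"
        using xs by (intro topological_tendstoD) auto
      hence ev: "eventually (\<lambda>k. f k < ereal e) sequentially"
      proof (rule eventually_mono)
        fix k assume "xs k \<in> interior A"
        hence "xs k \<in> A" using interior_subset by auto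
        then obtain z where z: "z \<in> F (xs k)" "z \<in> closure U" unfolding A_def by auto
        have "dist x z \<le> e/2" using z(2) cU by auto
        hence "f k \<le> ereal (e/2)" unfolding f_def set_dist_e_def
          using INF_lower2[OF z(1), of "\<lambda>s. ereal (dist x s)" "ereal (e/2)"] by simp
        also have "\<dots> < ereal e" using e(1) by simp
        finally show "f k < ereal e" .
      qed
      from frequently_eventually_frequently[OF freq ev]
      have "frequently (\<lambda>k. False) sequentially" by (rule frequently_elim1) auto
      thus False by simp
    qed
    hence "t \<in> frontier (closure A)" using tA Acl by (simp add: frontier_def)
    thus "t \<in> \<Union>\<D>" unfolding \<D>_def A_def using U(1) by auto
  qed
  ultimately show ?thesis by blast
qed



lemma tendsto_mat_inner [tendsto_intros]:
  assumes "(f \<longlongrightarrow> M) F" "(g \<longlongrightarrow> X) F"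
  shows "((\<lambda>k. mat_inner (f k) (g k)) \<longlongrightarrow> mat_inner M X) F"
  unfolding mat_inner_def trace_def matrix_matrix_mult_def
  by (simp, intro tendsto_intros assms)

lemma tendsto_quad [tendsto_intros]:
  fixes X :: "'a \<Rightarrow> real^'n^'n"
  assumes "(X \<longlongrightarrow> L) F"
  shows "((\<lambda>k. x \<bullet> (X k *v x)) \<longlongrightarrow> x \<bullet> (L *v x)) F"
  unfolding inner_vec_def matrix_vector_mult_def
  by (simp, intro tendsto_intros assms)

lemma psd_limit:
  fixes X :: "nat \<Rightarrow> real^'n^'n"
  assumes ps: "\<And>k. psd (X k)" and lim: "X \<longlonglongrightarrow> L"
  shows "psd L"
  unfolding psd_def
proof
  show "symmetric_mat L"
    unfolding symmetric_mat_def
  proof (simp add: vec_eq_iff transpose_def, intro allI)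
    fix i j
    have "(\<lambda>k. X k $ i $ j) \<longlonglongrightarrow> L $ i $ j" using lim by (intro tendsto_intros)
    moreover have "(\<lambda>k. X k $ i $ j) \<longlonglongrightarrow> L $ j $ i"
    proof -
      have "(\<lambda>k. X k $ j $ i) \<longlonglongrightarrow> L $ j $ i" using lim by (intro tendsto_intros)
      moreover have "X k $ j $ i = X k $ i $ j" for k
      proof -
        have "transpose (X k) = X k" using ps[of k] unfolding psd_def symmetric_mat_def by simp
        hence "transpose (X k) $ i $ j = X k $ i $ j" by simp
        thus ?thesis by (simp add: transpose_def)
      qed
      ultimately show ?thesis by simp
    qed
    ultimately show "L $ j $ i = L $ i $ j" using LIMSEQ_unique by metis
  qed
  show "\<forall>x. 0 \<le> x \<bullet> (L *v x)"
  proof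
    fix x
    have "(\<lambda>k. x \<bullet> (X k *v x)) \<longlonglongrightarrow> x \<bullet> (L *v x)" using lim by (intro tendsto_intros)
    moreover have "\<And>k. 0 \<le> x \<bullet> (X k *v x)" using ps unfolding psd_def by auto
    ultimately show "0 \<le> x \<bullet> (L *v x)" by (intro LIMSEQ_le_const) auto
  qed
qed

lemma psd_comb:
  fixes X Y :: "real^'n^'n"
  assumes "psd X" "psd Y" "0 \<le> a" "0 \<le> c"
  shows "psd (a *\<^sub>R X + c *\<^sub>R Y)"
  using assms unfolding psd_def symmetric_mat_def
  by (simp add: transpose_def vec_eq_iff matrix_vector_mult_add_rdistrib
      scaleR_matrix_vector_assoc[symmetric] inner_add_right)

lemma freq_limit_le:
  fixes f :: "nat \<Rightarrow> real"
  assumes "f \<longlonglongrightarrow> L" "frequently (\<lambda>k. f k \<le> c) sequentially"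
  shows "L \<le> c"
proof (rule ccontr)
  assume "\<not> L \<le> c"
  hence "eventually (\<lambda>k. c < f k) sequentially" using assms(1) by (intro order_tendstoD(1)) auto
  from frequently_eventually_frequently[OF assms(2) this]
  have "frequently (\<lambda>k. False) sequentially" by (rule frequently_elim1) auto
  thus False by simp
qed

lemma closed_graph_P:
  fixes C Cb :: "real^'n^'n" and A :: "'m::finite \<Rightarrow> real^'n^'n" and b :: "real^'m"
  shows "closed {(s,z). z \<in> primal_opt C Cb A b s}"
proof (unfold closed_sequential_limits, intro allI impI, elim conjE)
  fix p and l :: "real \<times> (real^'n^'n)"
  assume P: "\<forall>n. p n \<in> {(s,z). z \<in> primal_opt C Cb A b s}" and lim: "p \<longlonglongrightarrow> l"
  define s where "s = (\<lambda>k. fst (p k))"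
  define X where "X = (\<lambda>k. snd (p k))"
  obtain t L where l: "l = (t, L)" by fastforce
  have st: "s \<longlonglongrightarrow> t" unfolding s_def using tendsto_fst[OF lim] l by simp
  have XL: "X \<longlonglongrightarrow> L" unfolding X_def using tendsto_snd[OF lim] l by simp
  have opt: "X k \<in> primal_opt C Cb A b (s k)" for k
  proof -
    have "p k = (s k, X k)" by (simp add: s_def X_def)
    thus ?thesis using P[rule_format, of k] by simp
  qed
  have featk: "\<And>k. X k \<in> primal_feasible A b" using opt unfolding primal_opt_def by simp
  have feas: "L \<in> primal_feasible A b"
    unfolding primal_feasible_def
  proof (intro CollectI conjI allI)
    fix i
    have "(\<lambda>k. mat_inner (A i) (X k)) \<longlonglongrightarrow> mat_inner (A i) L" using XL by (intro tendsto_intros)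
    moreover have "\<And>k. mat_inner (A i) (X k) = b $ i" using featk
      unfolding primal_feasible_def by simp
    hence "(\<lambda>k. mat_inner (A i) (X k)) = (\<lambda>k. b $ i)" by (rule ext)
    ultimately have "(\<lambda>k. b $ i) \<longlonglongrightarrow> mat_inner (A i) L" by simp
    thus "mat_inner (A i) L = b $ i" using LIMSEQ_unique[OF _ tendsto_const] by blast
  next
    have "\<And>k. psd (X k)" using featk unfolding primal_feasible_def by simp
    thus "psd L" using XL by (rule psd_limit)
  qed
  have "\<forall>X'\<in>primal_feasible A b. mat_inner (C + t *\<^sub>R Cb) L \<le> mat_inner (C + t *\<^sub>R Cb) X'"
  proof
    fix X' assume X': "X' \<in> primal_feasible A b"
    have lim2: "(\<lambda>k. mat_inner (C + s k *\<^sub>R Cb) (X k) - mat_inner (C + s k *\<^sub>R Cb) X')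
        \<longlonglongrightarrow> mat_inner (C + t *\<^sub>R Cb) L - mat_inner (C + t *\<^sub>R Cb) X'"
      using st XL by (intro tendsto_intros)
    have le: "\<And>k. mat_inner (C + s k *\<^sub>R Cb) (X k) - mat_inner (C + s k *\<^sub>R Cb) X' \<le> 0"
    proof -
      fix k
      have "\<forall>X'\<in>primal_feasible A b. mat_inner (C + s k *\<^sub>R Cb) (X k) \<le> mat_inner (C + s k *\<^sub>R Cb) X'"
        using opt[of k] unfolding primal_opt_def by simp
      thus "mat_inner (C + s k *\<^sub>R Cb) (X k) - mat_inner (C + s k *\<^sub>R Cb) X' \<le> 0" using X' by simp
    qed
    have "mat_inner (C + t *\<^sub>R Cb) L - mat_inner (C + t *\<^sub>R Cb) X' \<le> 0"
      by (rule LIMSEQ_le_const2[OF lim2]) (use le in blast)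
    thus "mat_inner (C + t *\<^sub>R Cb) L \<le> mat_inner (C + t *\<^sub>R Cb) X'" by simp
  qed
  with feas show "l \<in> {(s,z). z \<in> primal_opt C Cb A b s}" unfolding l primal_opt_def by auto
qed



lemma dual_comb:
  fixes C Cb :: "real^'n^'n" and A :: "'m::finite \<Rightarrow> real^'n^'n"
  assumes "(y1,S1) \<in> dual_feasible C Cb A t1" "(y2,S2) \<in> dual_feasible C Cb A t2"
    and "0 \<le> l" "l \<le> 1"
  shows "((1-l) *\<^sub>R y1 + l *\<^sub>R y2, (1-l) *\<^sub>R S1 + l *\<^sub>R S2) \<in> dual_feasible C Cb A ((1-l)*t1 + l*t2)"
proof -
  have e1: "(\<Sum>i\<in>UNIV. y1 $ i *\<^sub>R A i) + S1 = C + t1 *\<^sub>R Cb" and p1: "psd S1"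
    and e2: "(\<Sum>i\<in>UNIV. y2 $ i *\<^sub>R A i) + S2 = C + t2 *\<^sub>R Cb" and p2: "psd S2"
    using assms unfolding dual_feasible_def by auto
  have "(\<Sum>i\<in>UNIV. ((1-l) *\<^sub>R y1 + l *\<^sub>R y2) $ i *\<^sub>R A i)
     = (\<Sum>i\<in>UNIV. (1-l) *\<^sub>R (y1 $ i *\<^sub>R A i) + l *\<^sub>R (y2 $ i *\<^sub>R A i))"
    by (rule sum.cong) (simp_all add: scaleR_add_left)
  also have "\<dots> = (1-l) *\<^sub>R (\<Sum>i\<in>UNIV. y1 $ i *\<^sub>R A i) + l *\<^sub>R (\<Sum>i\<in>UNIV. y2 $ i *\<^sub>R A i)"
    by (simp add: sum.distrib scaleR_sum_right)
  finally have "(\<Sum>i\<in>UNIV. ((1-l) *\<^sub>R y1 + l *\<^sub>R y2) $ i *\<^sub>R A i) + ((1-l) *\<^sub>R S1 + l *\<^sub>R S2)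
      = (1-l) *\<^sub>R ((\<Sum>i\<in>UNIV. y1 $ i *\<^sub>R A i) + S1) + l *\<^sub>R ((\<Sum>i\<in>UNIV. y2 $ i *\<^sub>R A i) + S2)"
    by (simp add: algebra_simps)
  also have "\<dots> = C + ((1-l)*t1 + l*t2) *\<^sub>R Cb"
    unfolding e1 e2 by (simp add: algebra_simps)
  finally show ?thesis using psd_comb[OF p1 p2] assms(3,4) unfolding dual_feasible_def by auto
qed

lemma closed_graph_D:
  fixes C Cb :: "real^'n^'n" and A :: "'m::finite \<Rightarrow> real^'n^'n" and b :: "real^'m"
  shows "closed {(s,z). z \<in> dual_opt C Cb A b s}"
proof (unfold closed_sequential_limits, intro allI impI, elim conjE)
  fix p and l :: "real \<times> ((real^'m) \<times> (real^'n^'n))"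
  assume P: "\<forall>n. p n \<in> {(s,z). z \<in> dual_opt C Cb A b s}" and lim: "p \<longlonglongrightarrow> l"
  define s where "s = (\<lambda>k. fst (p k))"
  define y where "y = (\<lambda>k. fst (snd (p k)))"
  define S where "S = (\<lambda>k. snd (snd (p k)))"
  obtain t yl Sl where l: "l = (t, yl, Sl)" by (metis prod.collapse)
  have st: "s \<longlonglongrightarrow> t" unfolding s_def using tendsto_fst[OF lim] l by simp
  have yl: "y \<longlonglongrightarrow> yl" unfolding y_def using tendsto_fst[OF tendsto_snd[OF lim]] l by simp
  have Sl: "S \<longlonglongrightarrow> Sl" unfolding S_def using tendsto_snd[OF tendsto_snd[OF lim]] l by simp
  have opt: "(y k, S k) \<in> dual_opt C Cb A b (s k)" for k
  proof -
    have "p k = (s k, y k, S k)" by (simp add: s_def y_def S_def)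
    thus ?thesis using P[rule_format, of k] by simp
  qed
  hence feask: "\<And>k. (y k, S k) \<in> dual_feasible C Cb A (s k)" unfolding dual_opt_def by auto
  have optk: "\<And>k y' S'. (y', S') \<in> dual_feasible C Cb A (s k) \<Longrightarrow> b \<bullet> y' \<le> b \<bullet> y k"
  proof -
    fix k y' S' assume "(y', S') \<in> dual_feasible C Cb A (s k)"
    moreover have "\<forall>(y', S')\<in>dual_feasible C Cb A (s k). b \<bullet> y' \<le> b \<bullet> y k"
      using opt[of k] unfolding dual_opt_def by simp
    ultimately show "b \<bullet> y' \<le> b \<bullet> y k" by auto
  qed
  have feas: "(yl, Sl) \<in> dual_feasible C Cb A t"
    unfolding dual_feasible_def
  proof (intro CollectI conjI case_prodI)
    have "(\<lambda>k. (\<Sum>i\<in>UNIV. y k $ i *\<^sub>R A i) + S k) \<longlonglongrightarrow> (\<Sum>i\<in>UNIV. yl $ i *\<^sub>R A i) + Sl"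
      using yl Sl by (intro tendsto_intros)
    moreover have "(\<lambda>k. (\<Sum>i\<in>UNIV. y k $ i *\<^sub>R A i) + S k) = (\<lambda>k. C + s k *\<^sub>R Cb)"
    proof
      fix k show "(\<Sum>i\<in>UNIV. y k $ i *\<^sub>R A i) + S k = C + s k *\<^sub>R Cb"
        using feask[of k] unfolding dual_feasible_def by simp
    qed
    ultimately have L1: "(\<lambda>k. C + s k *\<^sub>R Cb) \<longlonglongrightarrow> (\<Sum>i\<in>UNIV. yl $ i *\<^sub>R A i) + Sl" by simp
    have L2: "(\<lambda>k. C + s k *\<^sub>R Cb) \<longlonglongrightarrow> C + t *\<^sub>R Cb" using st by (intro tendsto_intros)
    show "(\<Sum>i\<in>UNIV. yl $ i *\<^sub>R A i) + Sl = C + t *\<^sub>R Cb" using LIMSEQ_unique[OF L1 L2] .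
    have "psd (S k)" for k using feask[of k] unfolding dual_feasible_def by simp
    thus "psd Sl" using Sl by (rule psd_limit)
  qed
  have "\<forall>(y', S')\<in>dual_feasible C Cb A t. b \<bullet> y' \<le> b \<bullet> yl"
  proof (intro ballI, clarify)
    fix y' S' assume z': "(y', S') \<in> dual_feasible C Cb A t"
    have byl: "(\<lambda>k. b \<bullet> y k) \<longlonglongrightarrow> b \<bullet> yl" using yl by (intro tendsto_intros)
    have side: "b \<bullet> y' \<le> b \<bullet> yl"
      if t2: "t2 \<noteq> t" and z2: "(y2, S2) \<in> dual_feasible C Cb A t2"
        and fr: "frequently (\<lambda>k. 0 \<le> (s k - t)/(t2 - t) \<and> (s k - t)/(t2 - t) \<le> 1) sequentially"
      for t2 y2 S2
    proof -
      define la where "la = (\<lambda>k. (s k - t)/(t2 - t))"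
      have "la \<longlonglongrightarrow> (t - t)/(t2 - t)" unfolding la_def using st t2 by (intro tendsto_intros) auto
      hence lal: "la \<longlonglongrightarrow> 0" by simp
      define g where "g = (\<lambda>k. (1 - la k) * (b \<bullet> y') + la k * (b \<bullet> y2) - b \<bullet> y k)"
      have gl: "g \<longlonglongrightarrow> (1 - 0) * (b \<bullet> y') + 0 * (b \<bullet> y2) - b \<bullet> yl"
        unfolding g_def using lal yl by (intro tendsto_intros)
      have "frequently (\<lambda>k. g k \<le> 0) sequentially"
        using fr
      proof (rule frequently_elim1)
        fix k assume k: "0 \<le> (s k - t)/(t2 - t) \<and> (s k - t)/(t2 - t) \<le> 1"
        have "((1 - la k) *\<^sub>R y' + la k *\<^sub>R y2, (1 - la k) *\<^sub>R S' + la k *\<^sub>R S2)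
              \<in> dual_feasible C Cb A ((1 - la k) * t + la k * t2)"
        proof -
          have "0 \<le> la k" "la k \<le> 1" using k unfolding la_def by auto
          from dual_comb[OF z' z2 this] show ?thesis .
        qed
        moreover have "(1 - la k) * t + la k * t2 = s k"
        proof -
          have "la k * (t2 - t) = s k - t" using t2 unfolding la_def by simp
          moreover have "(1 - la k) * t + la k * t2 = t + la k * (t2 - t)" by (simp add: algebra_simps)
          ultimately show ?thesis by simp
        qed
        ultimately have "b \<bullet> ((1 - la k) *\<^sub>R y' + la k *\<^sub>R y2) \<le> b \<bullet> y k"
          using optk by auto
        thus "g k \<le> 0" unfolding g_def by (simp add: inner_add_right)
      qed
      from freq_limit_le[OF gl this] show ?thesis by simp
    qed
    have "(\<lambda>k. s k = t \<or> s k > t \<or> s k < t) = (\<lambda>k. True)" by auto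
    hence "frequently (\<lambda>k. s k = t \<or> s k > t \<or> s k < t) sequentially"
      by simp
    hence "frequently (\<lambda>k. s k = t) sequentially \<or> frequently (\<lambda>k. s k > t) sequentially
         \<or> frequently (\<lambda>k. s k < t) sequentially" by (simp add: frequently_disj_iff)
    moreover
    { assume "frequently (\<lambda>k. s k = t) sequentially"
      hence "frequently (\<lambda>k. b \<bullet> y' - b \<bullet> y k \<le> 0) sequentially"
      proof (rule frequently_elim1)
        fix k assume "s k = t"
        hence "(y', S') \<in> dual_feasible C Cb A (s k)" using z' by simp
        thus "b \<bullet> y' - b \<bullet> y k \<le> 0" using optk by simp
      qed
      moreover have "(\<lambda>k. b \<bullet> y' - b \<bullet> y k) \<longlonglongrightarrow> b \<bullet> y' - b \<bullet> yl"
        using yl by (intro tendsto_intros)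
      ultimately have "b \<bullet> y' - b \<bullet> yl \<le> 0" using freq_limit_le by blast
      hence "b \<bullet> y' \<le> b \<bullet> yl" by simp }
    moreover
    { assume f: "frequently (\<lambda>k. s k > t) sequentially"
      then obtain k0 where k0: "s k0 > t" by (metis frequently_ex)
      have "eventually (\<lambda>k. s k < s k0) sequentially" using st k0 by (intro order_tendstoD(2))
      from frequently_eventually_frequently[OF f this]
      have "frequently (\<lambda>k. 0 \<le> (s k - t)/(s k0 - t) \<and> (s k - t)/(s k0 - t) \<le> 1) sequentially"
      proof (rule frequently_elim1)
        fix k assume k: "s k > t \<and> s k < s k0"
        show "0 \<le> (s k - t)/(s k0 - t) \<and> (s k - t)/(s k0 - t) \<le> 1"
          using k k0 by (auto simp: divide_le_eq_1)
      qed
      from side[OF _ feask[of k0] this] k0 have "b \<bullet> y' \<le> b \<bullet> yl" by simp }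
    moreover
    { assume f: "frequently (\<lambda>k. s k < t) sequentially"
      then obtain k0 where k0: "s k0 < t" by (metis frequently_ex)
      have "eventually (\<lambda>k. s k > s k0) sequentially" using st k0 by (intro order_tendstoD(1))
      from frequently_eventually_frequently[OF f this]
      have "frequently (\<lambda>k. 0 \<le> (s k - t)/(s k0 - t) \<and> (s k - t)/(s k0 - t) \<le> 1) sequentially"
      proof (rule frequently_elim1)
        fix k assume k: "s k < t \<and> s k0 < s k"
        have eq: "(s k - t)/(s k0 - t) = (t - s k)/(t - s k0)"
          by (metis minus_diff_eq minus_divide_divide)
        show "0 \<le> (s k - t)/(s k0 - t) \<and> (s k - t)/(s k0 - t) \<le> 1"
          unfolding eq using k k0 by (auto simp: divide_le_eq_1)
      qed
      from side[OF _ feask[of k0] this] k0 have "b \<bullet> y' \<le> b \<bullet> yl" by simp }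
    ultimately show "b \<bullet> y' \<le> b \<bullet> yl" by blast
  qed
  with feas show "l \<in> {(s,z). z \<in> dual_opt C Cb A b s}" unfolding l dual_opt_def by simp
qed



theorem proposition2:
  fixes C Cb :: "real^'n^'n" and A :: "'m::finite \<Rightarrow> real^'n^'n" and b :: "real^'m"
  assumes symC: "symmetric_mat C" and symCb: "symmetric_mat Cb"
    and symA: "\<forall>i. symmetric_mat (A i)"
    and indep: "inj A" "independent (range A)"
    and slater_P: "\<exists>X. pd X \<and> (\<forall>i. mat_inner (A i) X = b $ i)"
    and slater_D: "\<exists>y S. pd S \<and> (\<Sum>i\<in>UNIV. y $ i *\<^sub>R A i) + S = C"
  shows "interior {eps \<in> interior (finite_value_set C Cb A b).
           \<not> (PK_cont_rel (primal_opt C Cb A b) (interior (finite_value_set C Cb A b)) eps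
              \<and> PK_cont_rel (dual_opt C Cb A b) (interior (finite_value_set C Cb A b)) eps)} = {}"
proof -
  define I where "I = interior (finite_value_set C Cb A b)"
  obtain D1 where D1: "countable D1" "\<forall>D\<in>D1. closed D \<and> interior D = {}"
      "{t. \<not> inner_semicont_rel (primal_opt C Cb A b) I t} \<subseteq> \<Union>D1"
    using isc_closed_graph[OF closed_graph_P[where C=C and Cb=Cb and A=A and b=b], where XX=I] by (elim exE conjE) (rule that)
  obtain D2 where D2: "countable D2" "\<forall>D\<in>D2. closed D \<and> interior D = {}"
      "{t. \<not> inner_semicont_rel (dual_opt C Cb A b) I t} \<subseteq> \<Union>D2"
    using isc_closed_graph[OF closed_graph_D[where C=C and Cb=Cb and A=A and b=b], where XX=I] by (elim exE conjE) (rule that)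
  have osc1: "\<And>t. outer_semicont_rel (primal_opt C Cb A b) I t"
    by (rule osc_closed_graph[OF closed_graph_P[where C=C and Cb=Cb and A=A and b=b]])
  have osc2: "\<And>t. outer_semicont_rel (dual_opt C Cb A b) I t"
    by (rule osc_closed_graph[OF closed_graph_D[where C=C and Cb=Cb and A=A and b=b]])
  have sub: "{eps \<in> I. \<not> (PK_cont_rel (primal_opt C Cb A b) I eps \<and> PK_cont_rel (dual_opt C Cb A b) I eps)}
      \<subseteq> \<Union>(D1 \<union> D2)"
  proof
    fix eps assume "eps \<in> {eps \<in> I. \<not> (PK_cont_rel (primal_opt C Cb A b) I eps \<and> PK_cont_rel (dual_opt C Cb A b) I eps)}"
    hence "\<not> inner_semicont_rel (primal_opt C Cb A b) I eps \<or> \<not> inner_semicont_rel (dual_opt C Cb A b) I eps"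
      using osc1[of eps] osc2[of eps] unfolding PK_cont_rel_def by simp
    thus "eps \<in> \<Union>(D1 \<union> D2)"
    proof
      assume "\<not> inner_semicont_rel (primal_opt C Cb A b) I eps"
      hence "eps \<in> \<Union>D1" using D1(3) by blast
      thus ?thesis by simp
    next
      assume "\<not> inner_semicont_rel (dual_opt C Cb A b) I eps"
      hence "eps \<in> \<Union>D2" using D2(3) by blast
      thus ?thesis by simp
    qed
  qed
  have "euclidean interior_of \<Union>(D1 \<union> D2) = ({} :: real set)"
  proof (rule Baire_category_alt)
    show "completely_metrizable_space (euclidean :: real topology) \<or>
        locally_compact_space (euclidean :: real topology) \<and> regular_space (euclidean :: real topology)"
      by (rule disjI1, rule completely_metrizable_space_euclidean)
    show "countable (D1 \<union> D2)" using D1(1) D2(1) by simp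
    fix T assume "T \<in> D1 \<union> D2"
    thus "closedin euclidean T \<and> euclidean interior_of T = {}"
    proof -
      have "closed T \<and> interior T = {}" using \<open>T \<in> D1 \<union> D2\<close> D1(2) D2(2) by blast
      thus ?thesis using closed_closedin[of T] euclidean_interior_of[of T] by metis
    qed
  qed
  hence i0: "interior (\<Union>(D1 \<union> D2)) = {}" by (simp only: euclidean_interior_of)
  moreover have "interior {eps \<in> I. \<not> (PK_cont_rel (primal_opt C Cb A b) I eps \<and> PK_cont_rel (dual_opt C Cb A b) I eps)}
      \<subseteq> interior (\<Union>(D1 \<union> D2))" by (rule interior_mono[OF sub])
  ultimately have "interior {eps \<in> I. \<not> (PK_cont_rel (primal_opt C Cb A b) I eps \<and> PK_cont_rel (dual_opt C Cb A b) I eps)} = {}"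
    by (metis subset_empty)
  thus ?thesis by (simp only: I_def)
qed


end
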